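(* Let $A$ be an $n\times n$ real matrix with $n$ distinct (possibly complex) eigenvalues $\lambda_1,\dots,\lambda_n$. For each $i$, let $x_i\in\mathbb{C}^n$ be the left eigenvector of $A$ associated with $\lambda_i$ (i.e. $x_i^H A=\lambda_i x_i^H$) whose Euclidean norm equals $1$ and whose first nonzero entry (counting from the top) is positive. Let $\mathcal{S}_v\subseteq\{1,2,\dots,n\}$. Then there exists a vector $b\in\mathbb{R}^n$ with $\mathrm{Supp}(b)\subseteq\mathcal{S}_v$ such that the continuous-time linear time-invariant system $\frac{dx(t)}{dt}=Ax(t)+bu(t)$ is controllable if and only if $\mathrm{Supp}(x_i)\cap\mathcal{S}_v\neq\emptyset$ for every $i\in\{1,2,\dots,n\}$.
   Context: For a vector $x$, $\mathrm{Supp}(x)$ denotes the set of row indices $j$ with $x_j\neq 0$. The superscript $H$ denotes conjugate transpose. Controllability of $\frac{dx}{dt}=Ax+Bu$ (equivalently, of the pair $(A,B)$) is the usual notion for continuous-time LTI systems. *)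

theory Defs
  imports "HOL-Analysis.Analysis"
begin

definition cmat :: "real^'n^'n \<Rightarrow> complex^'n^'n" where
  "cmat A = (\<chi> i j. complex_of_real (A $ i $ j))"

definition cvec_cnj :: "complex^'n \<Rightarrow> complex^'n" where
  "cvec_cnj x = (\<chi> j. cnj (x $ j))"

definition supp_vec :: "'a::zero^'n \<Rightarrow> 'n set" where
  "supp_vec x = {j. x $ j \<noteq> 0}"

definition eigenvalues :: "real^'n^'n \<Rightarrow> complex set" where
  "eigenvalues A = {l. \<exists>v. v \<noteq> 0 \<and> cmat A *v v = l *s v}"

definition left_eigvec :: "real^'n^'n \<Rightarrow> complex \<Rightarrow> complex^'n \<Rightarrow> bool" where
  "left_eigvec A l x \<longleftrightarrow> x \<noteq> 0 \<and> cvec_cnj x v* cmat A = l *s cvec_cnj x"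

definition first_nonzero_pos :: "complex^'n::{finite,linorder} \<Rightarrow> bool" where
  "first_nonzero_pos x \<longleftrightarrow>
     (\<exists>k. x $ k \<noteq> 0 \<and> (\<forall>j<k. x $ j = 0) \<and> Im (x $ k) = 0 \<and> Re (x $ k) > 0)"

definition controllable :: "real^'n^'n \<Rightarrow> real^'n \<Rightarrow> bool" where
  "controllable A b \<longleftrightarrow>
     (\<forall>x0 x1. \<exists>T>0. \<exists>u :: real \<Rightarrow> real. \<exists>x :: real \<Rightarrow> real^'n.
        continuous_on {0..T} u \<and> x 0 = x0 \<and> x T = x1 \<and>
        (\<forall>t\<in>{0..T}. (x has_vector_derivative (A *v x t + u t *\<^sub>R b)) (at t within {0..T})))"

end

theory Submission
  imports Defs "HOL-Computational_Algebra.Polynomial"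
begin




lemma bez_pow:
  fixes a b :: "'a::comm_ring_1"
  assumes "r*a + s*b = 1"
  shows "\<exists>r s. r*a^n + s*b = 1"
proof (induction n)
  case 0 then show ?case by (intro exI[of _ 1] exI[of _ 0]) simp
next
  case (Suc n)
  then obtain r' s' where h: "r'*a^n + s'*b = 1" by blast
  have "r'*a^n*(r*a + s*b) + s'*b = 1" using h assms by simp
  then have "(r'*r)*a^(Suc n) + (r'*a^n * s + s')*b = 1" by (simp add: algebra_simps)
  then show ?case by blast
qed

lemma jet0: "poly ((pderiv ^^ m) p) 0 = fact m * coeff (p::real poly) m"
proof (induction m arbitrary: p)
  case 0 then show ?case by (simp add: poly_0_coeff_0)
next
  case (Suc m)
  have "poly ((pderiv ^^ Suc m) p) 0 = poly ((pderiv ^^ m) (pderiv p)) 0"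
    by (simp add: funpow_Suc_right del: funpow.simps)
  also have "\<dots> = fact m * coeff (pderiv p) m" by (rule Suc)
  also have "\<dots> = fact (Suc m) * coeff p (Suc m)" by (simp add: coeff_pderiv algebra_simps)
  finally show ?case .
qed

definition rfl :: "real poly" where "rfl = [:1,-1:]"

lemma pderiv_iter_rfl: "(pderiv ^^ m) (p \<circ>\<^sub>p rfl) = smult ((-1)^m) ((pderiv ^^ m) p \<circ>\<^sub>p rfl)"
proof (induction m arbitrary: p)
  case 0 then show ?case by simp
next
  case (Suc m)
  have "(pderiv ^^ Suc m) (p \<circ>\<^sub>p rfl) = pderiv ((pderiv ^^ m) (p \<circ>\<^sub>p rfl))" by simp
  also have "\<dots> = smult ((-1)^m) (pderiv ((pderiv ^^ m) p \<circ>\<^sub>p rfl))" by (simp add: Suc pderiv_smult)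
  also have "\<dots> = smult ((-1)^Suc m) ((pderiv ^^ Suc m) p \<circ>\<^sub>p rfl)"
    by (simp add: pderiv_pcompose rfl_def pderiv_pCons)
  finally show ?case .
qed

lemma jet1: "poly ((pderiv ^^ m) p) 1 = (-1)^m * fact m * coeff (p \<circ>\<^sub>p rfl) m"
proof -
  have "poly ((pderiv ^^ m) (p \<circ>\<^sub>p rfl)) 0 = (-1)^m * poly ((pderiv ^^ m) p \<circ>\<^sub>p rfl) 0"
    by (simp only: pderiv_iter_rfl poly_smult)
  also have "\<dots> = (-1)^m * poly ((pderiv ^^ m) p) 1" by (simp only: poly_pcompose) (simp add: rfl_def)
  finally have "poly ((pderiv ^^ m) (p \<circ>\<^sub>p rfl)) 0 = (-1)^m * poly ((pderiv ^^ m) p) 1" .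
  then have "fact m * coeff (p \<circ>\<^sub>p rfl) m = (-1)^m * poly ((pderiv ^^ m) p) 1" by (simp add: jet0)
  then have "(-1)^m * (fact m * coeff (p \<circ>\<^sub>p rfl) m) = ((-1)^m * (-1)^m) * poly ((pderiv ^^ m) p) 1"
    by (simp add: mult.assoc)
  then show ?thesis by (simp add: minus_one_mult_self mult.assoc)
qed

lemma pcompose_one[simp]: "(1::'a::comm_semiring_1 poly) \<circ>\<^sub>p q = 1"
  by (simp add: one_pCons pcompose_pCons)

lemma pcompose_power: "(p ^ n) \<circ>\<^sub>p q = (p \<circ>\<^sub>p q) ^ n"
  by (induction n) (simp_all add: pcompose_mult)

lemma X_monom: "[:0,1:] = (monom 1 1 :: 'a::comm_ring_1 poly)"
  by (simp add: monom_Suc monom_0)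

lemma rfl_rfl: "(p \<circ>\<^sub>p rfl) \<circ>\<^sub>p rfl = p"
proof -
  have "rfl \<circ>\<^sub>p rfl = [:0,1:]" by (simp add: rfl_def pcompose_pCons)
  then show ?thesis by (metis pcompose_assoc pcompose_idR)
qed

lemma coeff_dvd_eq:
  assumes "[:0,1:]^N dvd (p - q)" "m < N"
  shows "coeff p m = coeff (q::real poly) m"
proof -
  obtain r where "p - q = [:0,1:]^N * r" using assms(1) by (auto elim: dvdE)
  then have "p = q + monom 1 N * r" by (simp add: X_monom monom_power)
  then show ?thesis using assms(2) by (simp add: coeff_monom_mult)
qed

lemma hermite:
  fixes \<alpha> \<beta> :: "nat \<Rightarrow> real"
  shows "\<exists>p. \<forall>m<N. poly ((pderiv ^^ m) p) 0 = \<alpha> m \<and> poly ((pderiv ^^ m) p) 1 = \<beta> m"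
proof -
  define X :: "real poly" where "X = [:0,1:]^N"
  define Y where "Y = X \<circ>\<^sub>p rfl"
  have b1: "1 * [:0,1:] + 1 * rfl = 1" by (simp add: rfl_def one_pCons)
  obtain r1 s1 where "r1 * [:0,1:]^N + s1 * rfl = 1" using bez_pow[OF b1] by blast
  then have "s1 * rfl + r1 * [:0,1:]^N = 1" by (simp add: algebra_simps)
  from bez_pow[OF this, of N] obtain s r where "s * rfl^N + r * X = 1" unfolding X_def by blast
  moreover have "rfl^N = Y" by (simp add: Y_def X_def pcompose_power rfl_def pcompose_pCons)
  ultimately have bz: "r * X + s * Y = 1" by (simp add: algebra_simps)
  have bz': "(r \<circ>\<^sub>p rfl) * Y + (s \<circ>\<^sub>p rfl) * X = 1"
  proof -
    have "(r * X + s * Y) \<circ>\<^sub>p rfl = 1" using bz by simp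
    then show ?thesis by (simp add: pcompose_add pcompose_mult Y_def rfl_rfl)
  qed
  define P where "P = (\<Sum>m<N. monom (\<alpha> m / fact m) m)"
  define Q where "Q = (\<Sum>m<N. monom ((-1)^m * \<beta> m / fact m) m)"
  define p where "p = P * s * Y + (Q \<circ>\<^sub>p rfl) * r * X"
  have d0: "X dvd (p - P)"
  proof -
    have "p - P = P * (s * Y - 1) + (Q \<circ>\<^sub>p rfl) * r * X" by (simp add: p_def algebra_simps)
    also have "\<dots> = X * (r * (Q \<circ>\<^sub>p rfl) - P * r)"
    proof -
      have "s * Y - 1 = s * Y - (r * X + s * Y)" by (simp add: bz)
      then have e: "s * Y - 1 = - (r * X)" by simp
      show ?thesis by (subst e) (simp add: algebra_simps)
    qed
    finally show ?thesis by simp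
  qed
  have d1: "X dvd (p \<circ>\<^sub>p rfl - Q)"
  proof -
    have "p \<circ>\<^sub>p rfl = (P \<circ>\<^sub>p rfl) * (s \<circ>\<^sub>p rfl) * X + Q * (r \<circ>\<^sub>p rfl) * Y"
      by (simp add: p_def pcompose_add pcompose_mult Y_def rfl_rfl)
    then have "p \<circ>\<^sub>p rfl - Q = (P \<circ>\<^sub>p rfl) * (s \<circ>\<^sub>p rfl) * X + Q * ((r \<circ>\<^sub>p rfl) * Y - 1)"
      by (simp add: algebra_simps)
    also have "\<dots> = X * ((P \<circ>\<^sub>p rfl) * (s \<circ>\<^sub>p rfl) - Q * (s \<circ>\<^sub>p rfl))"
    proof -
      have "(r \<circ>\<^sub>p rfl) * Y - 1 = (r \<circ>\<^sub>p rfl) * Y - ((r \<circ>\<^sub>p rfl) * Y + (s \<circ>\<^sub>p rfl) * X)" by (simp add: bz')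
      then have e: "(r \<circ>\<^sub>p rfl) * Y - 1 = - ((s \<circ>\<^sub>p rfl) * X)" by simp
      show ?thesis by (subst e) (simp add: algebra_simps)
    qed
    finally show ?thesis by simp
  qed
  have cP: "coeff P m = \<alpha> m / fact m" if "m < N" for m
    using that by (simp add: P_def coeff_sum)
  have cQ: "coeff Q m = (-1)^m * \<beta> m / fact m" if "m < N" for m
    using that by (simp add: Q_def coeff_sum)
  show ?thesis
  proof (intro exI[of _ p] allI impI conjI)
    fix m assume m: "m < N"
    show "poly ((pderiv ^^ m) p) 0 = \<alpha> m"
      using coeff_dvd_eq[OF d0[unfolded X_def] m] cP[OF m] by (simp add: jet0)
    show "poly ((pderiv ^^ m) p) 1 = \<beta> m"
      using coeff_dvd_eq[OF d1[unfolded X_def] m] cQ[OF m] by (simp add: jet1)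
  qed
qed


lemma span_sum_idx:
  fixes f :: "'i \<Rightarrow> 'v::real_vector"
  assumes "finite I" "v \<in> span (f ` I)"
  shows "\<exists>c. v = (\<Sum>i\<in>I. c i *\<^sub>R f i)"
proof -
  let ?T = "{v. \<exists>c. v = (\<Sum>i\<in>I. c i *\<^sub>R f i)}"
  have sT: "subspace ?T"
    unfolding subspace_def
  proof (intro conjI ballI allI)
    show "0 \<in> ?T" by (auto intro!: exI[of _ "\<lambda>_. 0"])
  next
    fix x y assume "x \<in> ?T" "y \<in> ?T"
    then obtain c d where "x = (\<Sum>i\<in>I. c i *\<^sub>R f i)" "y = (\<Sum>i\<in>I. d i *\<^sub>R f i)" by blast
    then show "x + y \<in> ?T"
      by (auto intro!: exI[of _ "\<lambda>i. c i + d i"] simp: sum.distrib scaleR_add_left)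
  next
    fix r :: real and x assume "x \<in> ?T"
    then obtain c where "x = (\<Sum>i\<in>I. c i *\<^sub>R f i)" by blast
    then show "r *\<^sub>R x \<in> ?T"
      by (auto intro!: exI[of _ "\<lambda>i. r * c i"] simp: scaleR_sum_right)
  qed
  have fT: "f ` I \<subseteq> ?T"
  proof
    fix v assume "v \<in> f ` I"
    then obtain j where j: "j \<in> I" "v = f j" by blast
    have "(\<Sum>i\<in>I. (if i = j then 1 else 0) *\<^sub>R f i) = f j"
    proof -
      have "(\<Sum>i\<in>I. (if i = j then 1 else 0) *\<^sub>R f i) = (\<Sum>i\<in>I. if i = j then f i else 0)"
        by (rule sum.cong) auto
      then show ?thesis using assms(1) j(1) by simp
    qed
    then show "v \<in> ?T" using j by (auto intro!: exI[of _ "\<lambda>i. if i = j then 1 else 0"])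
  qed
  have "span (f ` I) \<subseteq> ?T" by (rule span_minimal[OF fT sT])
  then show ?thesis using assms(2) by blast
qed

lemma span_invariant:
  fixes A :: "real^'n^'n"
  assumes "\<And>v. v \<in> S \<Longrightarrow> A *v v \<in> span S" "v \<in> span S"
  shows "A *v v \<in> span S"
proof -
  have sT: "subspace {x. A *v x \<in> span S}"
    by (rule linear_subspace_linear_preimage) (auto simp: matrix_vector_mul_linear subspace_span)
  have fT: "S \<subseteq> {x. A *v x \<in> span S}" using assms(1) by auto
  have "span S \<subseteq> {x. A *v x \<in> span S}" by (rule span_minimal[OF fT sT])
  then show ?thesis using assms(2) by blast
qed

lemma krylov_finite:
  fixes A :: "real^'n^'n" and b :: "real^'n"
  defines "K \<equiv> \<lambda>k. ((\<lambda>v. A *v v) ^^ k) b"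
  shows "\<exists>N. K N \<in> span (K ` {..<N})"
proof (rule ccontr)
  assume H: "\<not> ?thesis"
  have ind: "independent (K ` {..<k}) \<and> card (K ` {..<k}) = k" for k
  proof (induction k)
    case 0 then show ?case by (simp add: independent_empty)
  next
    case (Suc k)
    have nin: "K k \<notin> span (K ` {..<k})" using H by auto
    then have nin2: "K k \<notin> K ` {..<k}" by (meson span_base)
    have e: "K ` {..<Suc k} = insert (K k) (K ` {..<k})" by (simp add: lessThan_Suc)
    have i1: "independent (insert (K k) (K ` {..<k}))"
      using Suc.IH nin nin2 by (simp add: independent_insert)
    have c1: "card (insert (K k) (K ` {..<k})) = Suc k"
      using Suc.IH nin2 by (simp add: card_insert_disjoint)
    show ?case unfolding e using i1 c1 by blast
  qed
  have i2: "independent (K ` {..<Suc DIM(real^'n)})" using ind by blast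
  have c2: "card (K ` {..<Suc DIM(real^'n)}) = Suc DIM(real^'n)" using ind by blast
  from independent_bound[OF i2] c2 show False by linarith
qed


lemma controllable_of_krylov:
  fixes A :: "real^'n^'n" and b :: "real^'n"
  assumes Kh: "\<And>\<eta>. (\<And>k. \<eta> \<bullet> (((\<lambda>v. A *v v) ^^ k) b) = 0) \<Longrightarrow> \<eta> = 0"
  shows "controllable A b"
proof -
  define K where "K = (\<lambda>k. ((\<lambda>v. A *v v) ^^ k) b)"
  have KS: "K (Suc k) = A *v K k" for k by (simp add: K_def)
  have K0: "K 0 = b" by (simp add: K_def)
  have "\<exists>N. K N \<in> span (K ` {..<N})" unfolding K_def by (rule krylov_finite)
  define N where "N = (LEAST N. K N \<in> span (K ` {..<N}))"
  have KN: "K N \<in> span (K ` {..<N})" unfolding N_def by (rule LeastI_ex) fact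
  define V where "V = span (K ` {..<N})"
  have inv: "A *v v \<in> V" if vK: "v \<in> K ` {..<N}" for v
  proof -
    obtain j where j: "j < N" "v = K j" using vK by blast
    show ?thesis
    proof (cases "Suc j < N")
      case True
      then have "K (Suc j) \<in> span (K ` {..<N})" by (auto intro: span_base)
      then show ?thesis using j by (simp add: V_def KS)
    next
      case False then have "Suc j = N" using j by simp
      then show ?thesis using j KN KS[of j] by (simp add: V_def)
    qed
  qed
  have allK: "K k \<in> V" for k
  proof (induction k)
    case 0
    show ?case
    proof (cases "N = 0")
      case True then show ?thesis using KN by (simp add: V_def)
    next
      case False then show ?thesis by (auto simp: V_def intro: span_base)
    qed
  next
    case (Suc k) then show ?case unfolding KS V_def
      using span_invariant[of "K ` {..<N}" A "K k"] inv unfolding V_def by blast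
  qed
  have VU: "V = UNIV"
  proof (rule ccontr)
    assume "V \<noteq> UNIV"
    then have dlt: "dim (K ` {..<N}) < DIM(real^'n)"
      using dim_eq_full[of "K ` {..<N}"] dim_subset_UNIV[of "K ` {..<N}"] by (simp add: V_def)
    then obtain \<eta> :: "real^'n" where "\<eta> \<noteq> 0" and orth: "\<And>y. y \<in> span (K ` {..<N}) \<Longrightarrow> orthogonal \<eta> y"
      using orthogonal_to_subspace_exists[OF dlt] by blast
    have "\<eta> \<bullet> K k = 0" for k using orth[of "K k"] allK[of k] by (simp add: V_def orthogonal_def)
    then have "\<eta> = 0" using Kh unfolding K_def by blast
    then show False using \<open>\<eta> \<noteq> 0\<close> by simp
  qed
  have N0: "N \<noteq> 0"
  proof
    assume "N = 0"
    then have "V = {0}" by (simp add: V_def)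
    then have "(1::real^'n) = 0" using VU by blast
    then show False by (simp add: vec_eq_iff)
  qed
  then obtain M where NM: "N = Suc M" by (cases N) auto
  obtain a where a: "K N = (\<Sum>j<N. a j *\<^sub>R K j)" using span_sum_idx[OF _ KN] by blast
  define c where "c = (\<lambda>j. if j = N then 1 else - a j)"
  define g where "g = (\<lambda>m. \<Sum>i<N - m. c (i + m + 1) *\<^sub>R K i)"
  have ann: "(\<Sum>i<Suc N. c i *\<^sub>R K i) = 0"
  proof -
    have "(\<Sum>i<N. c i *\<^sub>R K i) = - (\<Sum>i<N. a i *\<^sub>R K i)"
      by (simp add: c_def sum_negf[symmetric])
    then show ?thesis using a by (simp add: c_def)
  qed
  have Ag: "A *v g m = (if m = 0 then 0 else g (m - 1)) - c m *\<^sub>R b" if "m < N" for m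
  proof -
    have "A *v g m = (\<Sum>i<N - m. c (i + m + 1) *\<^sub>R K (Suc i))"
      by (simp add: g_def vec.sum matrix_vector_mult_scaleR KS)
    show ?thesis
    proof (cases "m = 0")
      case True
      have "(\<Sum>i<Suc N. c i *\<^sub>R K i) = c 0 *\<^sub>R K 0 + (\<Sum>i<N. c (Suc i) *\<^sub>R K (Suc i))"
        by (rule sum.lessThan_Suc_shift)
      then show ?thesis using True ann \<open>A *v g m = _\<close> K0 by (simp add: eq_neg_iff_add_eq_0 add.commute)
    next
      case False
      have "N - (m - 1) = Suc (N - m)" using False that by simp
      then have "g (m - 1) = (\<Sum>i<Suc (N - m). c (i + m) *\<^sub>R K i)"
        using False by (simp add: g_def)
      also have "\<dots> = c m *\<^sub>R K 0 + (\<Sum>i<N - m. c (Suc i + m) *\<^sub>R K (Suc i))"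
        by (subst sum.lessThan_Suc_shift) simp
      finally show ?thesis using False \<open>A *v g m = _\<close> K0 by simp
    qed
  qed
  have gM: "g M = b" using NM by (simp add: g_def c_def K0)
  have gspan: "span (g ` {..<N}) = UNIV"
  proof -
    have inv2: "A *v v \<in> span (g ` {..<N})" if vg: "v \<in> g ` {..<N}" for v
    proof -
      obtain m where m: "m < N" "v = g m" using vg by blast
      have bs: "b \<in> span (g ` {..<N})" using gM NM by (auto intro: span_base)
      show ?thesis
      proof (cases "m = 0")
        case True then show ?thesis using m Ag[of m] bs by (simp add: span_mul span_neg)
      next
        case False
        then have "g (m - 1) \<in> span (g ` {..<N})" using m by (auto intro: span_base)
        then show ?thesis using m Ag[of m] bs False by (simp add: span_diff span_mul)
      qed
    qed
    have "K k \<in> span (g ` {..<N})" for k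
    proof (induction k)
      case 0 then show ?case using gM NM K0 by (auto intro: span_base)
    next
      case (Suc k) then show ?case unfolding KS
        using span_invariant[of "g ` {..<N}" A "K k"] inv2 by blast
    qed
    then have "K ` {..<N} \<subseteq> span (g ` {..<N})" by blast
    then have "V \<subseteq> span (g ` {..<N})" unfolding V_def by (simp add: span_minimal subspace_span)
    then show ?thesis using VU by blast
  qed
  show ?thesis unfolding controllable_def
  proof (intro allI)
    fix x0 x1 :: "real^'n"
    obtain \<alpha> where \<alpha>: "x0 = (\<Sum>m<N. \<alpha> m *\<^sub>R g m)" using span_sum_idx[of "{..<N}" x0 g] gspan by auto
    obtain \<beta> where \<beta>: "x1 = (\<Sum>m<N. \<beta> m *\<^sub>R g m)" using span_sum_idx[of "{..<N}" x1 g] gspan by auto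
    obtain p where p: "\<And>m. m < N \<Longrightarrow> poly ((pderiv ^^ m) p) 0 = \<alpha> m \<and> poly ((pderiv ^^ m) p) 1 = \<beta> m"
      using hermite[of N \<alpha> \<beta>] by blast
    define \<phi> where "\<phi> = (\<lambda>m t. poly ((pderiv ^^ m) p) t)"
    define X where "X = (\<lambda>t. \<Sum>m<N. \<phi> m t *\<^sub>R g m)"
    define u where "u = (\<lambda>t. \<Sum>m<Suc N. c m * \<phi> m t)"
    have der: "(X has_vector_derivative (\<Sum>m<N. \<phi> (Suc m) t *\<^sub>R g m)) (at t within {0..1})" for t
      unfolding X_def
    proof (rule has_vector_derivative_sum)
      fix m assume "m \<in> {..<N}"
      have "(\<phi> m has_real_derivative \<phi> (Suc m) t) (at t within {0..1})"
        unfolding \<phi>_def by (simp add: has_field_derivative_at_within[OF poly_DERIV])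
      then show "((\<lambda>t. \<phi> m t *\<^sub>R g m) has_vector_derivative \<phi> (Suc m) t *\<^sub>R g m) (at t within {0..1})"
        using has_vector_derivative_scaleR[OF _ has_vector_derivative_const[of "g m"]] by fastforce
    qed
    have eq: "(\<Sum>m<N. \<phi> (Suc m) t *\<^sub>R g m) = A *v X t + u t *\<^sub>R b" for t
    proof -
      have "A *v X t = (\<Sum>m<N. \<phi> m t *\<^sub>R ((if m = 0 then 0 else g (m - 1)) - c m *\<^sub>R b))"
        unfolding X_def by (simp add: vec.sum matrix_vector_mult_scaleR Ag)
      also have "\<dots> = (\<Sum>m<N. \<phi> m t *\<^sub>R (if m = 0 then 0 else g (m - 1))) - (\<Sum>m<N. c m * \<phi> m t) *\<^sub>R b"
        by (simp add: scaleR_diff_right sum_subtractf scaleR_sum_left mult.commute)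
      also have "(\<Sum>m<N. \<phi> m t *\<^sub>R (if m = 0 then 0 else g (m - 1))) = (\<Sum>m<M. \<phi> (Suc m) t *\<^sub>R g m)"
        unfolding NM by (subst sum.lessThan_Suc_shift) simp
      finally have "A *v X t + u t *\<^sub>R b = (\<Sum>m<M. \<phi> (Suc m) t *\<^sub>R g m) + (u t - (\<Sum>m<N. c m * \<phi> m t)) *\<^sub>R b"
        by (simp add: algebra_simps)
      also have "u t - (\<Sum>m<N. c m * \<phi> m t) = \<phi> N t" by (simp add: u_def c_def)
      finally show ?thesis using gM NM by simp
    qed
    show "\<exists>T>0. \<exists>u X. continuous_on {0..T} u \<and> X 0 = x0 \<and> X T = x1 \<and>
        (\<forall>t\<in>{0..T}. (X has_vector_derivative A *v X t + u t *\<^sub>R b) (at t within {0..T}))"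
    proof (intro exI conjI ballI)
      show "(0::real) < 1" by simp
      show "continuous_on {0..1} u" unfolding u_def \<phi>_def
        by (intro continuous_intros continuous_on_poly)
      show "X 0 = x0" unfolding X_def \<alpha> \<phi>_def using p by simp
      show "X 1 = x1" unfolding X_def \<beta> \<phi>_def using p by simp
      fix t :: real assume "t \<in> {0..1}"
      show "(X has_vector_derivative A *v X t + u t *\<^sub>R b) (at t within {0..1})"
        using der[of t] eq[of t] by simp
    qed
  qed
qed



lemma vander:
  fixes d lam :: "'i \<Rightarrow> complex"
  assumes fin: "finite I" and inj: "inj_on lam I" and z: "\<And>k. (\<Sum>i\<in>I. d i * lam i ^ k) = 0" and j: "j \<in> I"
  shows "d j = 0"
proof -
  define q where "q = (\<Prod>i\<in>I-{j}. [:- lam i, 1:])"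
  have s0: "(\<Sum>i\<in>I. d i * poly q (lam i)) = 0"
  proof -
    have "(\<Sum>i\<in>I. d i * poly q (lam i)) = (\<Sum>i\<in>I. \<Sum>k\<le>degree q. coeff q k * (d i * lam i ^ k))"
      by (simp add: poly_altdef sum_distrib_left mult.assoc mult.left_commute)
    also have "\<dots> = (\<Sum>k\<le>degree q. coeff q k * (\<Sum>i\<in>I. d i * lam i ^ k))"
      by (subst sum.swap) (simp add: sum_distrib_left)
    also have "\<dots> = 0" by (simp add: z)
    finally show ?thesis .
  qed
  have qz: "poly q (lam i) = 0" if "i \<in> I - {j}" for i
    unfolding q_def poly_prod using that fin by (auto intro!: prod_zero bexI[of _ i])
  have qnz: "poly q (lam j) \<noteq> 0"
    unfolding q_def poly_prod using fin inj j by (auto simp: inj_on_def)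
  have "(\<Sum>i\<in>I. d i * poly q (lam i)) = d j * poly q (lam j) + (\<Sum>i\<in>I-{j}. d i * poly q (lam i))"
    using fin j by (simp add: sum.remove)
  also have "(\<Sum>i\<in>I-{j}. d i * poly q (lam i)) = 0" using qz by simp
  finally show ?thesis using s0 qnz by simp
qed

definition lin :: "complex^'n \<Rightarrow> real^'n \<Rightarrow> complex" where
  "lin w v = (\<Sum>j\<in>UNIV. w $ j * complex_of_real (v $ j))"

lemma lin_eig:
  fixes A :: "real^'n^'n"
  assumes "w v* cmat A = l *s w"
  shows "lin w (A *v v) = l * lin w v"
proof -
  have "lin w (A *v v) = (\<Sum>j\<in>UNIV. \<Sum>i\<in>UNIV. w $ j * (cmat A $ j $ i) * complex_of_real (v $ i))"
    by (simp add: lin_def matrix_vector_mult_def cmat_def sum_distrib_left mult.assoc)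
  also have "\<dots> = (\<Sum>i\<in>UNIV. (\<Sum>j\<in>UNIV. w $ j * (cmat A $ j $ i)) * complex_of_real (v $ i))"
    by (subst sum.swap) (simp add: sum_distrib_right)
  also have "\<dots> = (\<Sum>i\<in>UNIV. (w v* cmat A) $ i * complex_of_real (v $ i))"
    by (simp add: vector_matrix_mult_def)
  also have "\<dots> = l * lin w v" using assms by (simp add: lin_def sum_distrib_left mult.assoc)
  finally show ?thesis .
qed

lemma lin_eig_pow:
  fixes A :: "real^'n^'n"
  assumes "w v* cmat A = l *s w"
  shows "lin w (((\<lambda>v. A *v v) ^^ k) b) = l ^ k * lin w b"
  by (induction k) (simp_all add: lin_eig[OF assms])

lemma lin_sum: "lin (\<Sum>i\<in>I. c i *s w i) v = (\<Sum>i\<in>I. c i * lin (w i) v)"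
proof -
  have "lin (\<Sum>i\<in>I. c i *s w i) v = (\<Sum>j\<in>UNIV. \<Sum>i\<in>I. c i * (w i $ j * complex_of_real (v $ j)))"
    by (simp add: lin_def sum_component sum_distrib_right mult.assoc)
  also have "\<dots> = (\<Sum>i\<in>I. c i * lin (w i) v)"
    by (subst sum.swap) (simp add: lin_def sum_distrib_left)
  finally show ?thesis .
qed

lemma transpose_invertible_c:
  fixes M :: "complex^'n^'n"
  assumes "invertible M"
  shows "invertible (transpose M)"
proof -
  obtain B where "B ** M = mat 1" using assms invertible_left_inverse by blast
  then have "transpose (B ** M) = mat 1" by (simp add: transpose_mat)
  then have "transpose M ** transpose B = mat 1" by (simp add: matrix_transpose_mul)
  then show ?thesis using invertible_right_inverse by blast
qed

lemma left_eig_exists: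
  fixes A :: "real^'n^'n"
  assumes "l \<in> eigenvalues A"
  shows "\<exists>w. w \<noteq> 0 \<and> w v* cmat A = l *s w"
proof -
  define M where "M = cmat A - mat l"
  obtain v where v: "v \<noteq> 0" "cmat A *v v = l *s v" using assms by (auto simp: eigenvalues_def)
  have ml: "mat l *v v = l *s v"
  proof (subst vec_eq_iff, intro allI)
    fix i
    have "(\<Sum>j\<in>UNIV. (if i = j then l else 0) * v $ j) = (\<Sum>j\<in>UNIV. if i = j then l * v $ j else 0)"
      by (rule sum.cong) auto
    then show "(mat l *v v) $ i = (l *s v) $ i" by (simp add: matrix_vector_mult_def mat_def)
  qed
  have "M *v v = 0" using v ml by (simp add: M_def matrix_vector_mult_diff_rdistrib)
  then have "\<not> (\<exists>B. B ** M = mat 1)" using v(1) matrix_left_invertible_ker by blast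
  then have "\<not> invertible M" using invertible_left_inverse by blast
  then have "\<not> invertible (transpose M)" by (metis transpose_invertible_c transpose_transpose)
  then have "\<not> (\<exists>B. B ** transpose M = mat 1)" using invertible_left_inverse by blast
  then obtain w where w: "w \<noteq> 0" "transpose M *v w = 0" using matrix_left_invertible_ker by blast
  have "w v* M = 0" using w by simp
  moreover have "w v* M = w v* cmat A - l *s w"
  proof (subst vec_eq_iff, intro allI)
    fix i
    have "(w v* M) $ i = (\<Sum>j\<in>UNIV. w $ j * cmat A $ j $ i - (if j = i then w $ j * l else 0))"
      unfolding vector_matrix_mult_def M_def mat_def
      by (simp add: right_diff_distrib) (rule sum.cong, auto)
    also have "\<dots> = (w v* cmat A) $ i - l * w $ i"
      by (simp add: sum_subtractf vector_matrix_mult_def mult.commute)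
    finally show "(w v* M) $ i = (w v* cmat A - l *s w) $ i" by simp
  qed
  ultimately have "w v* cmat A = l *s w" by simp
  then show ?thesis using w by blast
qed


lemma vm_sum: "(\<Sum>i\<in>I. a i *s w i) v* (M::'a::field^'n^'n) = (\<Sum>i\<in>I. a i *s (w i v* M))"
  by (simp flip: transpose_matrix_vector add: vec.sum vec.scale)

lemma eig_indep:
  fixes A :: "real^'n^'n" and W :: "complex \<Rightarrow> complex^'n"
  assumes fin: "finite E"
    and W: "\<And>\<mu>. \<mu> \<in> E \<Longrightarrow> W \<mu> \<noteq> 0 \<and> W \<mu> v* cmat A = \<mu> *s W \<mu>"
    and z: "(\<Sum>\<mu>\<in>E. c \<mu> *s W \<mu>) = 0" and m: "\<mu> \<in> E"
  shows "c \<mu> = 0"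
proof -
  have Zk: "(\<Sum>\<nu>\<in>E. (c \<nu> * \<nu> ^ k) *s W \<nu>) = 0" for k
  proof (induction k)
    case 0 then show ?case using z by simp
  next
    case (Suc k)
    have "(\<Sum>\<nu>\<in>E. (c \<nu> * \<nu> ^ k) *s W \<nu>) v* cmat A = (\<Sum>\<nu>\<in>E. (c \<nu> * \<nu> ^ Suc k) *s W \<nu>)"
      unfolding vm_sum by (rule sum.cong) (auto simp: W mult.commute mult.left_commute)
    then show ?case using Suc by (simp flip: transpose_matrix_vector)
  qed
  have "c \<mu> * W \<mu> $ r = 0" for r
  proof (rule vander[of E id "\<lambda>\<nu>. c \<nu> * W \<nu> $ r"])
    show "finite E" by fact
    show "inj_on id E" by simp
    show "\<mu> \<in> E" by fact
    fix k
    have "(\<Sum>\<nu>\<in>E. (c \<nu> * \<nu> ^ k) *s W \<nu>) $ r = 0" using Zk by simp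
    then show "(\<Sum>\<nu>\<in>E. c \<nu> * W \<nu> $ r * id \<nu> ^ k) = 0"
      by (simp add: sum_component mult.commute mult.left_commute)
  qed
  moreover obtain r where "W \<mu> $ r \<noteq> 0" using W[OF m] by (metis vec_eq_iff zero_index)
  ultimately show ?thesis by (metis mult_eq_0_iff)
qed

lemma krylov_from_eig:
  fixes A :: "real^'n^'n" and W :: "complex \<Rightarrow> complex^'n"
  assumes fin: "finite E" and cardE: "card E = CARD('n)"
    and W: "\<And>\<mu>. \<mu> \<in> E \<Longrightarrow> W \<mu> \<noteq> 0 \<and> W \<mu> v* cmat A = \<mu> *s W \<mu>"
    and nz: "\<And>\<mu>. \<mu> \<in> E \<Longrightarrow> lin (W \<mu>) b \<noteq> 0"
    and eta: "\<And>k. \<eta> \<bullet> (((\<lambda>v. A *v v) ^^ k) b) = 0"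
  shows "\<eta> = 0"
proof -
  have inj: "inj_on W E"
  proof (rule inj_onI)
    fix x y assume xy: "x \<in> E" "y \<in> E" "W x = W y"
    have "x *s W x = W x v* cmat A" using W[OF xy(1)] by simp
    also have "\<dots> = W y v* cmat A" using xy(3) by simp
    also have "\<dots> = y *s W y" using W[OF xy(2)] by simp
    finally have "x *s W x = y *s W x" using xy(3) by simp
    then have "(x - y) *s W x = 0" by (simp add: vector_sub_rdistrib)
    moreover obtain r where "W x $ r \<noteq> 0" using W[OF xy(1)] by (metis vec_eq_iff zero_index)
    ultimately have "(x - y) * W x $ r = 0" by (metis vector_smult_component zero_index)
    then show "x = y" using \<open>W x $ r \<noteq> 0\<close> by simp
  qed
  have finW: "finite (W ` E)" using fin by simp
  have ind: "vec.independent (W ` E)"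
  proof
    assume "vec.dependent (W ` E)"
    then obtain u where u1: "\<exists>v\<in>W ` E. u v \<noteq> 0" and u2: "(\<Sum>v\<in>W ` E. u v *s v) = 0"
      unfolding vec.dependent_finite[OF finW] by blast
    have s0: "(\<Sum>\<mu>\<in>E. u (W \<mu>) *s W \<mu>) = 0" using u2 by (simp add: sum.reindex[OF inj])
    have "u (W \<mu>) = 0" if m: "\<mu> \<in> E" for \<mu>
      by (rule eig_indep[OF fin W s0 m])
    then show False using u1 by blast
  qed
  have cW: "card (W ` E) = CARD('n)" using card_image[OF inj] cardE by simp
  have vdim: "vec.dim (UNIV::(complex^'n) set) = CARD('n)" by (rule vec_dim_card)
  have "UNIV \<subseteq> vec.span (W ` E)"
    by (metis cW vdim finW ind subset_UNIV vec.card_eq_dim)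
  then have sp: "vec.span (W ` E) = UNIV" by blast
  define \<eta>c :: "complex^'n" where "\<eta>c = (\<chi> j. complex_of_real (\<eta> $ j))"
  have "\<eta>c \<in> range (\<lambda>u. \<Sum>v\<in>W ` E. u v *s v)"
    by (metis UNIV_I sp vec.span_finite[OF finW])
  then obtain u where u: "\<eta>c = (\<Sum>v\<in>W ` E. u v *s v)" by blast
  then have u2: "\<eta>c = (\<Sum>\<mu>\<in>E. u (W \<mu>) *s W \<mu>)" by (simp add: sum.reindex[OF inj])
  have z: "u (W \<mu>) * lin (W \<mu>) b = 0" if m: "\<mu> \<in> E" for \<mu>
  proof (rule vander[of E id "\<lambda>\<mu>. u (W \<mu>) * lin (W \<mu>) b"])
    show "finite E" by fact
    show "inj_on id E" by simp
    show "\<mu> \<in> E" by fact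
    fix k
    have "lin \<eta>c (((\<lambda>v. A *v v) ^^ k) b) = complex_of_real (\<eta> \<bullet> (((\<lambda>v. A *v v) ^^ k) b))"
      unfolding lin_def \<eta>c_def inner_vec_def by simp
    also have "\<dots> = 0" using eta by simp
    finally have l0: "lin \<eta>c (((\<lambda>v. A *v v) ^^ k) b) = 0" .
    have "lin \<eta>c (((\<lambda>v. A *v v) ^^ k) b) = (\<Sum>\<mu>\<in>E. u (W \<mu>) * lin (W \<mu>) (((\<lambda>v. A *v v) ^^ k) b))"
      unfolding u2 by (rule lin_sum)
    also have "\<dots> = (\<Sum>\<mu>\<in>E. u (W \<mu>) * lin (W \<mu>) b * id \<mu> ^ k)"
    proof (rule sum.cong)
      fix \<mu> assume "\<mu> \<in> E"
      then have "lin (W \<mu>) (((\<lambda>v. A *v v) ^^ k) b) = \<mu> ^ k * lin (W \<mu>) b"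
        using W by (intro lin_eig_pow) blast
      then show "u (W \<mu>) * lin (W \<mu>) (((\<lambda>v. A *v v) ^^ k) b) = u (W \<mu>) * lin (W \<mu>) b * id \<mu> ^ k"
        by simp
    qed simp
    finally show "(\<Sum>\<mu>\<in>E. u (W \<mu>) * lin (W \<mu>) b * id \<mu> ^ k) = 0" using l0 by simp
  qed
  have "u (W \<mu>) = 0" if "\<mu> \<in> E" for \<mu> using nz[OF that] z[OF that] by simp
  then have "\<eta>c = 0" using u2 by simp
  then show ?thesis by (simp add: \<eta>c_def vec_eq_iff)
qed


lemma lin_linear: "linear (lin (w::complex^'n))"
proof (rule linearI)
  fix x y :: "real^'n"
  show "lin w (x + y) = lin w x + lin w y"
    by (simp add: lin_def sum.distrib distrib_left)
  fix c :: real
  show "lin w (c *\<^sub>R x) = c *\<^sub>R lin w x"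
    unfolding lin_def scaleR_sum_right
  proof (rule sum.cong)
    fix j
    show "w $ j * complex_of_real ((c *\<^sub>R x) $ j) = c *\<^sub>R (w $ j * complex_of_real (x $ j))"
    proof -
      have "(c *\<^sub>R x) $ j = c * x $ j" by simp
      then show ?thesis by (simp only:) (simp add: scaleR_conv_of_real)
    qed
  qed simp
qed

lemma lin_bl: "bounded_linear (lin w)"
  using lin_linear linear_conv_bounded_linear by blast

lemma nec:
  fixes A :: "real^'n^'n"
  assumes ctrl: "controllable A b" and le: "left_eigvec A l x" and orth: "lin (cvec_cnj x) b = 0"
  shows False
proof -
  define W where "W = cvec_cnj x"
  have Weig: "W v* cmat A = l *s W" using le by (simp add: left_eigvec_def W_def)
  have orthW: "lin W b = 0" using orth by (simp add: W_def)
  have "W \<noteq> 0"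
  proof
    assume "W = 0"
    then have "x = 0" by (simp add: W_def cvec_cnj_def vec_eq_iff)
    then show False using le by (simp add: left_eigvec_def)
  qed
  then obtain k where k: "W $ k \<noteq> 0" by (metis vec_eq_iff zero_index)
  obtain T u X where T: "T > 0" and X0: "X 0 = 0" and XT: "X T = axis k 1"
    and der: "\<And>t. t \<in> {0..T} \<Longrightarrow> (X has_vector_derivative (A *v X t + u t *\<^sub>R b)) (at t within {0..T})"
    using ctrl unfolding controllable_def by blast
  define z where "z = (\<lambda>t. lin W (X t))"
  have zder: "(z has_vector_derivative l * z t) (at t within {0..T})" if t: "t \<in> {0..T}" for t
  proof -
    have "(z has_derivative (\<lambda>h. lin W (h *\<^sub>R (A *v X t + u t *\<^sub>R b)))) (at t within {0..T})"
      unfolding z_def using bounded_linear.has_derivative[OF lin_bl der[OF t, unfolded has_vector_derivative_def]] .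
    moreover have "lin W (h *\<^sub>R (A *v X t + u t *\<^sub>R b)) = h *\<^sub>R (l * z t)" for h
    proof -
      have "lin W (h *\<^sub>R (A *v X t + u t *\<^sub>R b)) = h *\<^sub>R (lin W (A *v X t) + u t *\<^sub>R lin W b)"
        using lin_linear[of W] by (simp add: linear_add linear_scale)
      also have "\<dots> = h *\<^sub>R (l * z t)" by (simp add: lin_eig[OF Weig] z_def orthW)
      finally show ?thesis .
    qed
    ultimately show ?thesis by (simp add: has_vector_derivative_def)
  qed
  define h where "h = (\<lambda>t. exp (t *\<^sub>R (- l)) * z t)"
  have hder: "(h has_vector_derivative 0) (at t within {0..T})" if t: "t \<in> {0..T}" for t
  proof -
    have "(h has_vector_derivative exp (t *\<^sub>R (- l)) * (l * z t) + exp (t *\<^sub>R (- l)) * (- l) * z t) (at t within {0..T})"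
      unfolding h_def by (rule has_vector_derivative_mult[OF exp_scaleR_has_vector_derivative_right zder[OF t]])
    then show ?thesis by (simp add: algebra_simps)
  qed
  obtain c where c: "\<And>t. t \<in> {0..T} \<Longrightarrow> h t = c"
    using has_vector_derivative_zero_constant[of "{0..T}" h] hder by (metis convex_closed_interval(1))
  have "h 0 = 0" using X0 by (simp add: h_def z_def lin_def)
  moreover have "h T = exp (T *\<^sub>R (- l)) * W $ k"
  proof -
    have "lin W (axis k 1) = (\<Sum>j\<in>UNIV. if j = k then W $ j else 0)"
      unfolding lin_def by (rule sum.cong) (auto simp: axis_def)
    then show ?thesis using XT by (simp add: h_def z_def)
  qed
  moreover have "h 0 = h T" using c T by simp
  ultimately show False using k by (simp add: exp_not_eq_zero)
qed


lemma choose_b: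
  fixes W :: "complex \<Rightarrow> complex^'n"
  assumes fin: "finite E" and nz: "\<And>\<mu>. \<mu> \<in> E \<Longrightarrow> \<exists>j\<in>Sv. W \<mu> $ j \<noteq> 0"
  shows "\<exists>b::real^'n. supp_vec b \<subseteq> Sv \<and> (\<forall>\<mu>\<in>E. lin (W \<mu>) b \<noteq> 0)"
proof -
  obtain idx :: "'n \<Rightarrow> nat" and n where "idx ` UNIV = {i. i < n}" and inj: "inj_on idx UNIV"
    using finite_imp_inj_to_nat_seg[of "UNIV :: 'n set"] by auto
  define P where "P = (\<lambda>\<mu>. \<Sum>j\<in>Sv. monom (W \<mu> $ j) (idx j))"
  have finSv: "finite Sv" by simp
  have Pnz: "P \<mu> \<noteq> 0" if m: "\<mu> \<in> E" for \<mu>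
  proof -
    obtain j0 where j0: "j0 \<in> Sv" "W \<mu> $ j0 \<noteq> 0" using nz[OF m] by blast
    have "coeff (P \<mu>) (idx j0) = (\<Sum>j\<in>Sv. if j = j0 then W \<mu> $ j else 0)"
      unfolding P_def coeff_sum coeff_monom
      by (rule sum.cong) (use inj in \<open>auto simp: inj_on_def\<close>)
    also have "\<dots> = W \<mu> $ j0" using j0 finSv by simp
    finally show ?thesis using j0 by auto
  qed
  define R where "R = (\<Union>\<mu>\<in>E. {z. poly (P \<mu>) z = 0})"
  have "finite R" unfolding R_def using fin Pnz poly_roots_finite by blast
  then have "finite {t::real. complex_of_real t \<in> R}"
    by (rule finite_vimageI[of R complex_of_real, unfolded vimage_def]) (simp add: inj_on_def)
  then obtain t :: real where t: "complex_of_real t \<notin> R"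
    using ex_new_if_finite[OF infinite_UNIV_char_0] by blast
  define b :: "real^'n" where "b = (\<chi> j. if j \<in> Sv then t ^ idx j else 0)"
  have "supp_vec b \<subseteq> Sv" by (auto simp: supp_vec_def b_def)
  moreover have "lin (W \<mu>) b \<noteq> 0" if m: "\<mu> \<in> E" for \<mu>
  proof -
    have "lin (W \<mu>) b = (\<Sum>j\<in>UNIV. if j \<in> Sv then W \<mu> $ j * complex_of_real t ^ idx j else 0)"
      unfolding lin_def b_def by (rule sum.cong) auto
    also have "\<dots> = (\<Sum>j\<in>Sv. W \<mu> $ j * complex_of_real t ^ idx j)"
      by (simp add: sum.If_cases)
    also have "\<dots> = poly (P \<mu>) (complex_of_real t)"
      by (simp add: P_def poly_sum poly_monom)
    finally show ?thesis using t m by (auto simp: R_def)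
  qed
  ultimately show ?thesis by blast
qed

lemma vm_scale: "(c *s w) v* (M::'a::field^'n^'n) = c *s (w v* M)"
  by (simp flip: transpose_matrix_vector add: vec.scale)

lemma normalize_eig:
  assumes Wnz: "W \<noteq> 0" and Weig: "W v* cmat A = l *s W"
  shows "\<exists>x. left_eigvec A l x \<and> norm x = 1 \<and> first_nonzero_pos x \<and> supp_vec x = supp_vec W"
proof -
  have ex: "\<exists>j. W $ j \<noteq> 0" using Wnz by (metis vec_eq_iff zero_index)
  define k where "k = Min {j. W $ j \<noteq> 0}"
  have k: "W $ k \<noteq> 0" unfolding k_def using ex Min_in[of "{j. W $ j \<noteq> 0}"] by auto
  have bef: "W $ j = 0" if "j < k" for j
    using that Min_le[of "{j. W $ j \<noteq> 0}" j] unfolding k_def by fastforce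
  define a where "a = W $ k"
  define nW where "nW = norm W"
  have nWp: "nW > 0" using Wnz by (simp add: nW_def)
  have ap: "cmod a > 0" using k by (simp add: a_def)
  define s where "s = a / complex_of_real (cmod a * nW)"
  have s0: "s \<noteq> 0" using k nWp ap by (simp add: s_def a_def)
  have cs: "cmod s = 1 / nW" using ap nWp by (simp add: s_def norm_divide norm_mult)
  define x where "x = (\<chi> j. cnj (W $ j) * s)"
  have cx: "cvec_cnj x = cnj s *s W" by (simp add: cvec_cnj_def x_def vec_eq_iff mult.commute)
  have supp: "supp_vec x = supp_vec W" using s0 by (auto simp: supp_vec_def x_def)
  have xk: "x $ k = complex_of_real (cmod a / nW)"
  proof -
    have "x $ k = cnj a * a / complex_of_real (cmod a * nW)" by (simp add: x_def s_def a_def)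
    also have "cnj a * a = complex_of_real ((cmod a)^2)" by (metis complex_norm_square mult.commute)
    finally show ?thesis using ap by (simp add: power2_eq_square)
  qed
  have "x \<noteq> 0" using supp k by (auto simp: supp_vec_def)
  moreover have "cvec_cnj x v* cmat A = l *s cvec_cnj x"
    by (simp add: cx vm_scale Weig mult.commute)
  moreover have "norm x = 1"
  proof -
    have "norm x = L2_set (\<lambda>j. cmod s * cmod (W $ j)) UNIV"
      by (simp add: norm_vec_def x_def norm_mult mult.commute)
    also have "\<dots> = cmod s * norm W" by (simp add: norm_vec_def L2_set_right_distrib)
    finally show ?thesis using cs nWp by (simp add: nW_def)
  qed
  moreover have "first_nonzero_pos x"
    unfolding first_nonzero_pos_def
  proof (intro exI[of _ k] conjI allI impI)
    show "x $ k \<noteq> 0" using xk ap nWp by simp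
    show "Im (x $ k) = 0" using xk by simp
    show "Re (x $ k) > 0" using xk ap nWp by simp
    fix j assume "j < k" then show "x $ j = 0" using bef by (simp add: x_def)
  qed
  ultimately show ?thesis using supp unfolding left_eigvec_def by blast
qed


theorem theorem1:
  fixes A :: "((real, 'n::{finite,linorder}) vec, 'n) vec" and Sv :: "'n set"
  assumes "card (eigenvalues A) = CARD('n)"
  shows "(\<exists>b :: (real, 'n) vec. supp_vec b \<subseteq> Sv \<and> controllable A b) \<longleftrightarrow>
         (\<forall>l\<in>eigenvalues A. \<forall>x. left_eigvec A l x \<and> norm x = 1 \<and> first_nonzero_pos x
             \<longrightarrow> supp_vec x \<inter> Sv \<noteq> {})"
proof -
  have finE: "finite (eigenvalues A)" using assms by (metis card_ge_0_finite zero_less_card_finite)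
  show ?thesis
  proof
    assume "\<exists>b :: (real, 'n) vec. supp_vec b \<subseteq> Sv \<and> controllable A b"
    then obtain b :: "(real, 'n) vec" where bS: "supp_vec b \<subseteq> Sv" and bc: "controllable A b" by blast
    show "\<forall>l\<in>eigenvalues A. \<forall>x. left_eigvec A l x \<and> norm x = 1 \<and> first_nonzero_pos x
             \<longrightarrow> supp_vec x \<inter> Sv \<noteq> {}"
    proof (intro ballI allI impI)
      fix l x assume "l \<in> eigenvalues A" and lx: "left_eigvec A l x \<and> norm x = 1 \<and> first_nonzero_pos x"
      show "supp_vec x \<inter> Sv \<noteq> {}"
      proof
        assume empty: "supp_vec x \<inter> Sv = {}"
        have "lin (cvec_cnj x) b = 0"
          unfolding lin_def
        proof (rule sum.neutral, intro ballI)
          fix j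
          show "cvec_cnj x $ j * complex_of_real (b $ j) = 0"
          proof (cases "b $ j = 0")
            case False
            then have "j \<in> Sv" using bS by (auto simp: supp_vec_def)
            then have "x $ j = 0" using empty by (auto simp: supp_vec_def)
            then show ?thesis by (simp add: cvec_cnj_def)
          qed simp
        qed
        then show False using nec[OF bc] lx by blast
      qed
    qed
  next
    assume H: "\<forall>l\<in>eigenvalues A. \<forall>x. left_eigvec A l x \<and> norm x = 1 \<and> first_nonzero_pos x
             \<longrightarrow> supp_vec x \<inter> Sv \<noteq> {}"
    have "\<forall>\<mu>\<in>eigenvalues A. \<exists>w. w \<noteq> 0 \<and> w v* cmat A = \<mu> *s w" using left_eig_exists by blast
    then obtain W where W: "\<And>\<mu>. \<mu> \<in> eigenvalues A \<Longrightarrow> W \<mu> \<noteq> 0 \<and> W \<mu> v* cmat A = \<mu> *s W \<mu>"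
      by metis
    have nz: "\<exists>j\<in>Sv. W \<mu> $ j \<noteq> 0" if m: "\<mu> \<in> eigenvalues A" for \<mu>
    proof -
      obtain x where x: "left_eigvec A \<mu> x" "norm x = 1" "first_nonzero_pos x" "supp_vec x = supp_vec (W \<mu>)"
        using normalize_eig[of "W \<mu>" A \<mu>] W[OF m] by blast
      then have "supp_vec (W \<mu>) \<inter> Sv \<noteq> {}" using H m by metis
      then show ?thesis by (auto simp: supp_vec_def)
    qed
    obtain b :: "(real, 'n) vec" where bS: "supp_vec b \<subseteq> Sv" and bnz: "\<forall>\<mu>\<in>eigenvalues A. lin (W \<mu>) b \<noteq> 0"
      using choose_b[where E="eigenvalues A" and Sv=Sv and W=W] finE nz by blast
    have "controllable A b"
    proof (rule controllable_of_krylov)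
      fix \<eta> :: "(real, 'n) vec" assume "\<And>k. \<eta> \<bullet> (((\<lambda>v. A *v v) ^^ k) b) = 0"
      then show "\<eta> = 0" using krylov_from_eig[OF finE assms W] bnz by blast
    qed
    then show "\<exists>b :: (real, 'n) vec. supp_vec b \<subseteq> Sv \<and> controllable A b" using bS by blast
  qed
qed

end
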